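(* Prioritized planning is suboptimal for the makespan objective in general for the class of P-solvable MAPF instances: there exists a P-solvable MAPF instance such that, for every priority ordering $\prec$, every solution consistent with $\prec$ has makespan strictly greater than the minimum makespan over all solutions of the instance.
   Context: A MAPF instance consists of a connected undirected graph $G=(V,E)$ and $M$ agents $a_1,\dots,a_M$; agent $a_i$ has a start vertex $s_i$ and a target vertex $t_i$, and start vertices are pairwise distinct, as are target vertices. Time is discrete; at each time step every agent either moves to an adjacent vertex or waits. A path for $a_i$ is a sequence $\pi_i=\langle \pi_i(0),\pi_i(1),\dots\rangle$ with $\pi_i(0)=s_i$, consecutive vertices equal or adjacent, and $\pi_i(t)=t_i$ for all $t\ge T_i$, where the arrival time $T_i$ is the least such time. Two agents collide if they occupy the same vertex at the same time, or traverse the same edge in opposite directions at the same time step. A solution is a collision-free set of paths, one per agent; its makespan is $\max_i T_i$. A priority ordering is a strict partial order $\prec$ on $\{1,\dots,M\}$ ($a_i$ has higher priority than $a_j$ iff $i\prec j$). A solution $\{\pi_i\}$ is consistent with $\prec$ if for every $i$ the arrival time of $\pi_i$ equals the minimum arrival time over all paths for $a_i$ that do not collide with any $\pi_k$ with $k\prec i$ (higher priority agents never wait for lower priority agents). A MAPF instance is P-solvable iff it has a solution consistent with some priority ordering. *)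

theory Defs
  imports Main
begin

definition graph_ok :: "'v set \<Rightarrow> ('v \<Rightarrow> 'v \<Rightarrow> bool) \<Rightarrow> bool" where
  "graph_ok V Adj \<longleftrightarrow> finite V \<and> V \<noteq> {}
     \<and> (\<forall>u w. Adj u w \<longrightarrow> u \<in> V \<and> w \<in> V)
     \<and> (\<forall>u w. Adj u w \<longrightarrow> Adj w u)
     \<and> (\<forall>u. \<not> Adj u u)
     \<and> (\<forall>u\<in>V. \<forall>w\<in>V. Adj\<^sup>*\<^sup>* u w)"

definition mapf_instance ::
  "'v set \<Rightarrow> ('v \<Rightarrow> 'v \<Rightarrow> bool) \<Rightarrow> nat \<Rightarrow> (nat \<Rightarrow> 'v) \<Rightarrow> (nat \<Rightarrow> 'v) \<Rightarrow> bool" where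
  "mapf_instance V Adj M s t \<longleftrightarrow> graph_ok V Adj
     \<and> (\<forall>i\<in>{1..M}. s i \<in> V \<and> t i \<in> V)
     \<and> inj_on s {1..M} \<and> inj_on t {1..M}"

definition is_path :: "('v \<Rightarrow> 'v \<Rightarrow> bool) \<Rightarrow> 'v \<Rightarrow> 'v \<Rightarrow> (nat \<Rightarrow> 'v) \<Rightarrow> bool" where
  "is_path Adj a b \<pi> \<longleftrightarrow> \<pi> 0 = a
     \<and> (\<forall>k. \<pi> (Suc k) = \<pi> k \<or> Adj (\<pi> k) (\<pi> (Suc k)))
     \<and> (\<exists>T. \<forall>k\<ge>T. \<pi> k = b)"

definition arrival :: "'v \<Rightarrow> (nat \<Rightarrow> 'v) \<Rightarrow> nat" where
  "arrival b \<pi> = (LEAST T. \<forall>k\<ge>T. \<pi> k = b)"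

definition collide :: "(nat \<Rightarrow> 'v) \<Rightarrow> (nat \<Rightarrow> 'v) \<Rightarrow> bool" where
  "collide \<pi> \<sigma> \<longleftrightarrow> (\<exists>k. \<pi> k = \<sigma> k \<or> (\<pi> k = \<sigma> (Suc k) \<and> \<pi> (Suc k) = \<sigma> k))"

definition is_solution ::
  "('v \<Rightarrow> 'v \<Rightarrow> bool) \<Rightarrow> nat \<Rightarrow> (nat \<Rightarrow> 'v) \<Rightarrow> (nat \<Rightarrow> 'v) \<Rightarrow> (nat \<Rightarrow> nat \<Rightarrow> 'v) \<Rightarrow> bool" where
  "is_solution Adj M s t P \<longleftrightarrow>
     (\<forall>i\<in>{1..M}. is_path Adj (s i) (t i) (P i))
     \<and> (\<forall>i\<in>{1..M}. \<forall>j\<in>{1..M}. i \<noteq> j \<longrightarrow> \<not> collide (P i) (P j))"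

definition makespan :: "nat \<Rightarrow> (nat \<Rightarrow> 'v) \<Rightarrow> (nat \<Rightarrow> nat \<Rightarrow> 'v) \<Rightarrow> nat" where
  "makespan M t P = Max (insert 0 ((\<lambda>i. arrival (t i) (P i)) ` {1..M}))"

definition min_makespan ::
  "('v \<Rightarrow> 'v \<Rightarrow> bool) \<Rightarrow> nat \<Rightarrow> (nat \<Rightarrow> 'v) \<Rightarrow> (nat \<Rightarrow> 'v) \<Rightarrow> nat" where
  "min_makespan Adj M s t = (LEAST m. \<exists>P. is_solution Adj M s t P \<and> makespan M t P = m)"

text \<open>Priority ordering: strict partial order on the agents {1..M};
  prec i j means a_i has higher priority than a_j.\<close>

definition priority_ordering :: "nat \<Rightarrow> (nat \<Rightarrow> nat \<Rightarrow> bool) \<Rightarrow> bool" where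
  "priority_ordering M prec \<longleftrightarrow>
     (\<forall>i j. prec i j \<longrightarrow> i \<in> {1..M} \<and> j \<in> {1..M})
     \<and> (\<forall>i. \<not> prec i i)
     \<and> (\<forall>i j k. prec i j \<longrightarrow> prec j k \<longrightarrow> prec i k)"

definition consistent ::
  "('v \<Rightarrow> 'v \<Rightarrow> bool) \<Rightarrow> nat \<Rightarrow> (nat \<Rightarrow> 'v) \<Rightarrow> (nat \<Rightarrow> 'v) \<Rightarrow> (nat \<Rightarrow> nat \<Rightarrow> bool)
     \<Rightarrow> (nat \<Rightarrow> nat \<Rightarrow> 'v) \<Rightarrow> bool" where
  "consistent Adj M s t prec P \<longleftrightarrow> is_solution Adj M s t P
     \<and> (\<forall>i\<in>{1..M}. arrival (t i) (P i) =
          (LEAST T. \<exists>\<pi>. is_path Adj (s i) (t i) \<pi> \<and> arrival (t i) \<pi> = T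
                        \<and> (\<forall>k. prec k i \<longrightarrow> \<not> collide \<pi> (P k))))"

definition P_solvable ::
  "('v \<Rightarrow> 'v \<Rightarrow> bool) \<Rightarrow> nat \<Rightarrow> (nat \<Rightarrow> 'v) \<Rightarrow> (nat \<Rightarrow> 'v) \<Rightarrow> bool" where
  "P_solvable Adj M s t \<longleftrightarrow>
     (\<exists>prec P. priority_ordering M prec \<and> consistent Adj M s t prec P)"

end

theory Submission
  imports Defs
begin

definition A :: "nat \<Rightarrow> nat \<Rightarrow> bool" where
  "A u w \<longleftrightarrow> (u,w) \<in> {(0,1),(1,0),(0,2),(2,0),(0,3),(3,0),(1,4),(4,1),(1,5),(5,1)}"

definition VV :: "nat set" where "VV = {0..5}"
definition ss :: "nat \<Rightarrow> nat" where "ss i = (if i = 1 then 0 else 4)"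
definition tt :: "nat \<Rightarrow> nat" where "tt i = (if i = 1 then 4 else 2)"

lemma A_simp: "A u w \<longleftrightarrow> (u=0\<and>w=1) \<or> (u=1\<and>w=0) \<or> (u=0\<and>w=2) \<or> (u=2\<and>w=0) \<or> (u=0\<and>w=3)
  \<or> (u=3\<and>w=0) \<or> (u=1\<and>w=4) \<or> (u=4\<and>w=1) \<or> (u=1\<and>w=5) \<or> (u=5\<and>w=1)"
  unfolding A_def by auto

lemma path_step: "is_path Adj a b \<pi> \<Longrightarrow> \<pi> (Suc k) = \<pi> k \<or> Adj (\<pi> k) (\<pi> (Suc k))"
  unfolding is_path_def by blast

lemma path_0: "is_path Adj a b \<pi> \<Longrightarrow> \<pi> 0 = a"
  unfolding is_path_def by blast

lemma arrival_stay: "is_path Adj a b \<pi> \<Longrightarrow> k \<ge> arrival b \<pi> \<Longrightarrow> \<pi> k = b"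
proof -
  assume p: "is_path Adj a b \<pi>" and k: "k \<ge> arrival b \<pi>"
  from p obtain T where "\<forall>k\<ge>T. \<pi> k = b" unfolding is_path_def by blast
  then have "\<forall>k\<ge>arrival b \<pi>. \<pi> k = b" unfolding arrival_def by (rule LeastI)
  with k show ?thesis by blast
qed

lemma arrival_le: "\<forall>k\<ge>T. \<pi> k = b \<Longrightarrow> arrival b \<pi> \<le> T"
  unfolding arrival_def by (rule Least_le)

lemma collide_sym: "collide \<pi> \<sigma> = collide \<sigma> \<pi>"
  unfolding collide_def by metis

lemma nocoll: "\<not> collide \<pi> \<sigma> \<Longrightarrow> \<pi> k \<noteq> \<sigma> k \<and> \<not> (\<pi> k = \<sigma> (Suc k) \<and> \<pi> (Suc k) = \<sigma> k)"
  unfolding collide_def by blast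

definition q1 :: "nat \<Rightarrow> nat" where "q1 k = (if k = 0 then 0 else if k = 1 then 1 else 4)"
definition q2 :: "nat \<Rightarrow> nat" where "q2 k = (if k = 0 then 4 else if k = 1 then 1 else if k = 2 then 0 else 2)"
definition o1 :: "nat \<Rightarrow> nat" where "o1 k = (if k = 0 then 0 else if k = 1 then 1 else if k = 2 then 5 else if k = 3 then 1 else 4)"
definition o2 :: "nat \<Rightarrow> nat" where "o2 k = (if k = 0 then 4 else if k = 1 then 4 else if k = 2 then 1 else if k = 3 then 0 else 2)"
definition r1 :: "nat \<Rightarrow> nat" where "r1 k = (if k = 0 then 0 else if k = 1 then 3 else if k = 2 then 3 else if k = 3 then 0 else if k = 4 then 1 else 4)"

lemma q1_path: "is_path A 0 4 q1"
  unfolding is_path_def q1_def A_simp by (auto intro!: exI[of _ 2])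
lemma q2_path: "is_path A 4 2 q2"
  unfolding is_path_def q2_def A_simp by (auto intro!: exI[of _ 3])
lemma o1_path: "is_path A 0 4 o1"
  unfolding is_path_def o1_def A_simp by (auto intro!: exI[of _ 4])
lemma o2_path: "is_path A 4 2 o2"
  unfolding is_path_def o2_def A_simp by (auto intro!: exI[of _ 4])
lemma r1_path: "is_path A 0 4 r1"
  unfolding is_path_def r1_def A_simp by (auto intro!: exI[of _ 5])

lemma q2_arr: "arrival 2 q2 = 3"
proof (rule antisym)
  show "arrival 2 q2 \<le> 3" by (rule arrival_le) (simp add: q2_def)
  show "3 \<le> arrival 2 q2"
  proof (rule ccontr)
    assume "\<not> 3 \<le> arrival 2 q2"
    then have "q2 2 = 2" using arrival_stay[OF q2_path, of 2] by simp
    then show False by (simp add: q2_def)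
  qed
qed

lemma o1_arr: "arrival 4 o1 = 4"
proof (rule antisym)
  show "arrival 4 o1 \<le> 4" by (rule arrival_le) (simp add: o1_def)
  show "4 \<le> arrival 4 o1"
  proof (rule ccontr)
    assume "\<not> 4 \<le> arrival 4 o1"
    then have "o1 3 = 4" using arrival_stay[OF o1_path, of 3] by simp
    then show False by (simp add: o1_def)
  qed
qed

lemma o2_arr: "arrival 2 o2 = 4"
proof (rule antisym)
  show "arrival 2 o2 \<le> 4" by (rule arrival_le) (simp add: o2_def)
  show "4 \<le> arrival 2 o2"
  proof (rule ccontr)
    assume "\<not> 4 \<le> arrival 2 o2"
    then have "o2 3 = 2" using arrival_stay[OF o2_path, of 3] by simp
    then show False by (simp add: o2_def)
  qed
qed

lemma q1_arr: "arrival 4 q1 = 2"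
proof (rule antisym)
  show "arrival 4 q1 \<le> 2" by (rule arrival_le) (simp add: q1_def)
  show "2 \<le> arrival 4 q1"
  proof (rule ccontr)
    assume "\<not> 2 \<le> arrival 4 q1"
    then have "q1 1 = 4" using arrival_stay[OF q1_path, of 1] by simp
    then show False by (simp add: q1_def)
  qed
qed

lemma o_nocoll: "\<not> collide o1 o2"
  unfolding collide_def o1_def o2_def by auto

lemma r1_q2_nocoll: "\<not> collide r1 q2"
  unfolding collide_def r1_def q2_def by auto

lemma dist1: "is_path A 0 4 \<pi> \<Longrightarrow> arrival 4 \<pi> \<ge> 2"
proof (rule ccontr)
  assume p: "is_path A 0 4 \<pi>" and "\<not> arrival 4 \<pi> \<ge> 2"
  then have "\<pi> 1 = 4" using arrival_stay[OF p, of 1] by simp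
  moreover have "\<pi> 0 = 0" using path_0[OF p] .
  moreover have "\<pi> 1 = \<pi> 0 \<or> A (\<pi> 0) (\<pi> 1)" using path_step[OF p, of 0] by simp
  ultimately show False by (simp add: A_simp)
qed

lemma dist2: "is_path A 4 2 \<pi> \<Longrightarrow> arrival 2 \<pi> \<ge> 3"
proof (rule ccontr)
  assume p: "is_path A 4 2 \<pi>" and "\<not> arrival 2 \<pi> \<ge> 3"
  then have "\<pi> 2 = 2" using arrival_stay[OF p, of 2] by simp
  moreover have "\<pi> 0 = 4" using path_0[OF p] .
  moreover have "\<pi> 1 = \<pi> 0 \<or> A (\<pi> 0) (\<pi> 1)" using path_step[OF p, of 0] by simp
  moreover have "\<pi> 2 = \<pi> 1 \<or> A (\<pi> 1) (\<pi> 2)" using path_step[OF p, of 1] by (simp add: numeral_2_eq_2)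
  ultimately show False by (auto simp add: A_simp)
qed


lemma caseA1:
  assumes p1: "is_path A 0 4 x" and a1: "arrival 4 x = 2" and p2: "is_path A 4 b y"
    and nc: "\<not> collide x y"
  shows False
proof -
  have x2: "x 2 = 4" using arrival_stay[OF p1, of 2] a1 by simp
  have x0: "x 0 = 0" using path_0[OF p1] .
  have s0: "x 1 = x 0 \<or> A (x 0) (x 1)" using path_step[OF p1, of 0] by simp
  have s1: "x 2 = x 1 \<or> A (x 1) (x 2)" using path_step[OF p1, of 1] by (simp add: numeral_2_eq_2)
  have y0: "y 0 = 4" using path_0[OF p2] .
  have t0: "y 1 = y 0 \<or> A (y 0) (y 1)" using path_step[OF p2, of 0] by simp
  have t1: "y 2 = y 1 \<or> A (y 1) (y 2)" using path_step[OF p2, of 1] by (simp add: numeral_2_eq_2)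
  have c1: "x 1 \<noteq> y 1 \<and> \<not> (x 1 = y 2 \<and> x 2 = y 1)" using nocoll[OF nc, of 1] by (simp add: numeral_2_eq_2)
  have c2: "x 2 \<noteq> y 2" using nocoll[OF nc, of 2] by simp
  have "x 1 = 1" using x0 x2 s0 s1 by (auto simp: A_simp)
  then show False using x2 y0 t0 t1 c1 c2 by (auto simp: A_simp)
qed

lemma caseA2:
  assumes p1: "is_path A 0 a x" and p2: "is_path A 4 2 y" and a2: "arrival 2 y = 3"
    and nc: "\<not> collide x y"
  shows "x 4 \<noteq> 4"
proof
  assume x4: "x 4 = 4"
  have y3: "y 3 = 2" using arrival_stay[OF p2, of 3] a2 by simp
  have y0: "y 0 = 4" using path_0[OF p2] .
  have x0: "x 0 = 0" using path_0[OF p1] .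
  have t0: "y 1 = y 0 \<or> A (y 0) (y 1)" using path_step[OF p2, of 0] by simp
  have t1: "y 2 = y 1 \<or> A (y 1) (y 2)" using path_step[OF p2, of 1] by (simp add: numeral_2_eq_2)
  have t2: "y 3 = y 2 \<or> A (y 2) (y 3)" using path_step[OF p2, of 2] by (simp add: numeral_3_eq_3)
  have s0: "x 1 = x 0 \<or> A (x 0) (x 1)" using path_step[OF p1, of 0] by simp
  have s1: "x 2 = x 1 \<or> A (x 1) (x 2)" using path_step[OF p1, of 1] by (simp add: numeral_2_eq_2)
  have s2: "x 3 = x 2 \<or> A (x 2) (x 3)" using path_step[OF p1, of 2] by (simp add: numeral_3_eq_3)
  have s3: "x 4 = x 3 \<or> A (x 3) (x 4)" using path_step[OF p1, of 3] by (simp add: numeral_3_eq_3 numeral_Bit0)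
  have c1: "x 1 \<noteq> y 1 \<and> \<not> (x 1 = y 2 \<and> x 2 = y 1)" using nocoll[OF nc, of 1] by (simp add: numeral_2_eq_2)
  have c2: "x 2 \<noteq> y 2 \<and> \<not> (x 2 = y 3 \<and> x 3 = y 2)" using nocoll[OF nc, of 2] by (simp add: numeral_3_eq_3)
  have c3: "x 3 \<noteq> y 3" using nocoll[OF nc, of 3] by simp
  have "y 1 = 1 \<and> y 2 = 0" using y0 y3 t0 t1 t2 by (auto simp: A_simp)
  then show False using x0 x4 s0 s1 s2 s3 c1 c2 c3 y3 by (auto simp: A_simp)
qed


lemma least1: "Q q1 \<Longrightarrow> (LEAST T. \<exists>\<pi>. is_path A 0 4 \<pi> \<and> arrival 4 \<pi> = T \<and> Q \<pi>) = 2"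
  by (rule Least_equality) (use q1_path q1_arr dist1 in auto)

lemma least2: "Q q2 \<Longrightarrow> (LEAST T. \<exists>\<pi>. is_path A 4 2 \<pi> \<and> arrival 2 \<pi> = T \<and> Q \<pi>) = 3"
  by (rule Least_equality) (use q2_path q2_arr dist2 in auto)

lemma two: "{1..2::nat} = {1,2}" by auto

lemma conn: "u \<in> VV \<Longrightarrow> A\<^sup>*\<^sup>* 0 u \<and> A\<^sup>*\<^sup>* u 0"
proof -
  assume "u \<in> VV"
  then have "u = 0 \<or> u = 1 \<or> u = 2 \<or> u = 3 \<or> u = 4 \<or> u = 5" unfolding VV_def by auto
  moreover have "A\<^sup>*\<^sup>* 0 1" "A\<^sup>*\<^sup>* 1 0" "A\<^sup>*\<^sup>* 0 2" "A\<^sup>*\<^sup>* 2 0" "A\<^sup>*\<^sup>* 0 3" "A\<^sup>*\<^sup>* 3 0"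
    "A\<^sup>*\<^sup>* 1 4" "A\<^sup>*\<^sup>* 4 1" "A\<^sup>*\<^sup>* 1 5" "A\<^sup>*\<^sup>* 5 1"
    by (auto intro!: r_into_rtranclp simp: A_simp)
  ultimately show ?thesis by (meson rtranclp_trans rtranclp.rtrancl_refl)
qed

lemma inst: "mapf_instance VV A 2 ss tt"
  unfolding mapf_instance_def graph_ok_def
proof (intro conjI)
  show "finite VV" "VV \<noteq> {}" unfolding VV_def by auto
  show "\<forall>u w. A u w \<longrightarrow> u \<in> VV \<and> w \<in> VV" unfolding VV_def A_simp by auto
  show "\<forall>u w. A u w \<longrightarrow> A w u" unfolding A_simp by auto
  show "\<forall>u. \<not> A u u" unfolding A_simp by auto
  show "\<forall>u\<in>VV. \<forall>w\<in>VV. A\<^sup>*\<^sup>* u w" using conn by (meson rtranclp_trans)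
  show "\<forall>i\<in>{1..2}. ss i \<in> VV \<and> tt i \<in> VV" unfolding two ss_def tt_def VV_def by auto
  show "inj_on ss {1..2}" unfolding two ss_def by auto
  show "inj_on tt {1..2}" unfolding two tt_def by auto
qed

lemma minms: "min_makespan A 2 ss tt \<le> 4"
proof -
  let ?P = "\<lambda>i::nat. if i = 1 then o1 else o2"
  have sol: "is_solution A 2 ss tt ?P"
    unfolding is_solution_def two
    using o1_path o2_path o_nocoll collide_sym[of o1 o2] by (auto simp: ss_def tt_def)
  have "makespan 2 tt ?P = 4"
    unfolding makespan_def two by (simp add: tt_def o1_arr o2_arr)
  with sol show ?thesis unfolding min_makespan_def by (metis (mono_tags, lifting) Least_le)
qed

lemma psolv: "P_solvable A 2 ss tt"
proof -
  define prec :: "nat \<Rightarrow> nat \<Rightarrow> bool" where "prec = (\<lambda>i j. i = 2 \<and> j = 1)"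
  define S where "S = {T. \<exists>\<pi>. is_path A 0 4 \<pi> \<and> arrival 4 \<pi> = T \<and> \<not> collide \<pi> q2}"
  have "arrival 4 r1 \<in> S" unfolding S_def using r1_path r1_q2_nocoll by auto
  then have "Least (\<lambda>T. T \<in> S) \<in> S" by (rule LeastI)
  then obtain x where x: "is_path A 0 4 x" "arrival 4 x = (LEAST T. T \<in> S)" "\<not> collide x q2"
    unfolding S_def by auto
  let ?P = "\<lambda>i::nat. if i = 1 then x else q2"
  have po: "priority_ordering 2 prec" unfolding priority_ordering_def prec_def by auto
  have sol: "is_solution A 2 ss tt ?P"
    unfolding is_solution_def two
    using x q2_path collide_sym[of x q2] by (auto simp: ss_def tt_def)
  have a1: "arrival (tt 1) (?P 1) = (LEAST T. \<exists>\<pi>. is_path A (ss 1) (tt 1) \<pi> \<and> arrival (tt 1) \<pi> = T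
                        \<and> (\<forall>k. prec k 1 \<longrightarrow> \<not> collide \<pi> (?P k)))"
    using x(2) unfolding S_def prec_def ss_def tt_def by simp
  have a2: "arrival (tt 2) (?P 2) = (LEAST T. \<exists>\<pi>. is_path A (ss 2) (tt 2) \<pi> \<and> arrival (tt 2) \<pi> = T
                        \<and> (\<forall>k. prec k 2 \<longrightarrow> \<not> collide \<pi> (?P k)))"
    unfolding prec_def ss_def tt_def using least2[of "\<lambda>_. True"] q2_arr by simp
  have "consistent A 2 ss tt prec ?P"
    unfolding consistent_def using sol a1 a2 two by auto
  with po show ?thesis unfolding P_solvable_def by blast
qed

theorem corollary1:
  shows "\<exists>(V :: nat set) Adj M s t.
     mapf_instance V Adj M s t \<and> P_solvable Adj M s t
     \<and> (\<forall>prec P. priority_ordering M prec \<longrightarrow> consistent Adj M s t prec P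
           \<longrightarrow> makespan M t P > min_makespan Adj M s t)"
proof (intro exI conjI allI impI)
  show "mapf_instance VV A 2 ss tt" by (rule inst)
  show "P_solvable A 2 ss tt" by (rule psolv)
  fix prec P
  assume po: "priority_ordering 2 prec" and cons: "consistent A 2 ss tt prec P"
  from cons have sol: "is_solution A 2 ss tt P" unfolding consistent_def by blast
  have p1: "is_path A 0 4 (P 1)" and p2: "is_path A 4 2 (P 2)"
    using sol unfolding is_solution_def two by (auto simp: ss_def tt_def)
  have nc: "\<not> collide (P 1) (P 2)" using sol unfolding is_solution_def two by auto
  have ar: "\<forall>i\<in>{1,2}. arrival (tt i) (P i) =
          (LEAST T. \<exists>\<pi>. is_path A (ss i) (tt i) \<pi> \<and> arrival (tt i) \<pi> = T
                        \<and> (\<forall>k. prec k i \<longrightarrow> \<not> collide \<pi> (P k)))"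
    using cons unfolding consistent_def two by blast
  have "arrival 4 (P 1) \<ge> 5"
  proof (cases "prec 1 2")
    case True
    have "\<not> prec k 1" for k
    proof
      assume "prec k 1"
      then have "k \<in> {1..2}" using po unfolding priority_ordering_def by blast
      then have "k = 1 \<or> k = 2" by auto
      then show False using \<open>prec k 1\<close> True po unfolding priority_ordering_def by blast
    qed
    then have "arrival 4 (P 1) = 2" using ar least1[of "\<lambda>_. True"]
      by (simp add: ss_def tt_def)
    then show ?thesis using caseA1[OF p1 _ p2 nc] by blast
  next
    case False
    have "\<not> prec k 2" for k
    proof
      assume "prec k 2"
      then have "k \<in> {1..2}" using po unfolding priority_ordering_def by blast
      then have "k = 1 \<or> k = 2" by auto
      then show False using \<open>prec k 2\<close> False po unfolding priority_ordering_def by blast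
    qed
    then have a2: "arrival 2 (P 2) = 3" using ar least2[of "\<lambda>_. True"]
      by (simp add: ss_def tt_def)
    have "P 1 4 \<noteq> 4" using caseA2[OF p1 p2 a2 nc] .
    then show ?thesis using arrival_stay[OF p1, of 4] by fastforce
  qed
  moreover have "arrival 4 (P 1) \<le> makespan 2 tt P"
    unfolding makespan_def two by (simp add: tt_def)
  ultimately show "min_makespan A 2 ss tt < makespan 2 tt P" using minms by linarith
qed

end
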